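(* In the approximating model (see context) with clock distribution satisfying the general-arrival assumptions (A1)–(A5) and $\mathbb E[S^2]<\infty$, for every $t>0$ there exist nonnegative random variables $Y_n$ such that $A_n(k)$ is stochastically dominated by $Y_n$ for all $1\le k\le tn^{2/3}$, and the family $(Y_n^2)_{n\ge1}$ is uniformly integrable.
   Context: Approximating model: fix $n$ and $\beta\in\mathbb R$. Let $T_1,\dots,T_n$ be i.i.d. nonnegative arrival clocks with distribution function $F_T$, and let $S_1,S_2,\dots$ be i.i.d. nonnegative service requirements (generic copy $S$), independent of the clocks. Put $D_j:=\frac{S_j}{n}(1+\beta n^{-1/3})$, $\Sigma_0:=0$, $\Sigma_k:=\sum_{j=1}^k D_j$. All $n$ customers start in the population. Set $Q_n(0)=0$ and for $k\ge1$, $Q_n(k)=(Q_n(k-1)+A_n(k)-1)^+$ with $A_n(k)=\sum_{i\notin\nu_k}\mathbf 1\{\Sigma_{k-1}\le T_i\le\Sigma_k\}$, where $\nu_k$ is the set of customers no longer in the population at the beginning of the $k$-th service: a customer leaves the population when its clock rings during a service, and whenever the queue is empty after a service completion, the customer of the population with the smallest clock is removed from the population and immediately put into service. General-arrival assumptions: (A1) $T$ has a positive continuous density $f_T$ on $[0,\infty)$ with $f_T(0)\in(0,\infty)$; (A2) for every $\bar x\in(0,\infty)$, $F_T(x)-F_T(\bar x)=f_T(\bar x)(x-\bar x)+o(|x-\bar x|^{4/3})$ as $x\to\bar x$; (A3) for every $C>0$, $\sup_{\bar x\le Cy^{1/3}}|F_T(\bar x+y)-F_T(\bar x)-f_T(\bar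 x)y|=o(y)$ as $y\downarrow0$; (A4) $f_T'$ exists and is continuous in a neighbourhood of $0$; (A5) $f_T(0)=\sup_{x\ge0}f_T(x)$. A real random variable $Y$ is stochastically dominated by $X$ if $\mathbb P(X\le x)\le\mathbb P(Y\le x)$ for all $x$. *)

theory Defs
  imports "HOL-Probability.Probability" "HOL-Library.Landau_Symbols"
begin

text \<open>Approximating model with n customers, parameter beta, clocks t and service
  requirements s (both indexed from 1).\<close>

definition svc_D :: "nat \<Rightarrow> real \<Rightarrow> (nat \<Rightarrow> real) \<Rightarrow> nat \<Rightarrow> real" where
  "svc_D n \<beta> s j = s j / real n * (1 + \<beta> * real n powr (-1/3))"

definition Sig :: "nat \<Rightarrow> real \<Rightarrow> (nat \<Rightarrow> real) \<Rightarrow> nat \<Rightarrow> real" where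
  "Sig n \<beta> s k = (\<Sum>j=1..k. svc_D n \<beta> s j)"

text \<open>Customers of the population (not in nu) whose clock rings during the k-th service.\<close>
definition arrivals ::
  "nat \<Rightarrow> real \<Rightarrow> (nat \<Rightarrow> real) \<Rightarrow> (nat \<Rightarrow> real) \<Rightarrow> nat set \<Rightarrow> nat \<Rightarrow> nat set" where
  "arrivals n \<beta> t s \<nu> k =
     {i \<in> {1..n}. i \<notin> \<nu> \<and> Sig n \<beta> s (k - 1) \<le> t i \<and> t i \<le> Sig n \<beta> s k}"

definition pick_min :: "(nat \<Rightarrow> real) \<Rightarrow> nat set \<Rightarrow> nat set" where
  "pick_min t P = (if P = {} then {} else {LEAST i. i \<in> P \<and> (\<forall>j\<in>P. t i \<le> t j)})"

text \<open>qstate n beta t s m = (nu_(m+1), Q_n(m)).\<close>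
primrec qstate ::
  "nat \<Rightarrow> real \<Rightarrow> (nat \<Rightarrow> real) \<Rightarrow> (nat \<Rightarrow> real) \<Rightarrow> nat \<Rightarrow> nat set \<times> nat" where
  "qstate n \<beta> t s 0 = (pick_min t {1..n}, 0)"
| "qstate n \<beta> t s (Suc m) =
     (let \<nu> = fst (qstate n \<beta> t s m);
          q = snd (qstate n \<beta> t s m);
          Arr = arrivals n \<beta> t s \<nu> (Suc m);
          a = card Arr
      in (\<nu> \<union> Arr \<union> (if q + a = 0 then pick_min t ({1..n} - (\<nu> \<union> Arr)) else {}),
          q + a - 1))"

text \<open>A_n(k), for k >= 1.\<close>
definition arr_count ::
  "nat \<Rightarrow> real \<Rightarrow> (nat \<Rightarrow> real) \<Rightarrow> (nat \<Rightarrow> real) \<Rightarrow> nat \<Rightarrow> nat" where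
  "arr_count n \<beta> t s k = card (arrivals n \<beta> t s (fst (qstate n \<beta> t s (k - 1))) k)"

definition dominated_by_law :: "'a measure \<Rightarrow> ('a \<Rightarrow> real) \<Rightarrow> real measure \<Rightarrow> bool" where
  "dominated_by_law M X \<mu> \<longleftrightarrow>
     (\<forall>x. measure \<mu> {..x} \<le> measure M {\<omega> \<in> space M. X \<omega> \<le> x})"

definition unif_integrable_laws :: "nat set \<Rightarrow> (nat \<Rightarrow> real measure) \<Rightarrow> bool" where
  "unif_integrable_laws I \<mu> \<longleftrightarrow>
     (\<forall>\<epsilon>>0. \<exists>K. \<forall>n\<in>I.
        (\<integral>\<^sup>+ x. ennreal (\<bar>x\<bar> * indicator {x. \<bar>x\<bar> > K} x) \<partial>\<mu> n) \<le> ennreal \<epsilon>)"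

end

theory Submission
  imports Defs
begin


lemma pow_fact_le_exp: "0 \<le> y \<Longrightarrow> y^m / fact m \<le> exp (y::real)"
proof -
  assume y: "0 \<le> y"
  have s: "summable (\<lambda>n. y ^ n /\<^sub>R fact n)" by (rule summable_exp_generic)
  have "(\<Sum>n\<in>{m}. y ^ n /\<^sub>R fact n) \<le> (\<Sum>n. y ^ n /\<^sub>R fact n)"
    by (rule sum_le_suminf[OF s]) (use y in auto)
  then show ?thesis by (simp add: exp_def divide_inverse_commute)
qed

lemma pow_fact_half:
  assumes y: "0 \<le> y" and ym: "6*y \<le> real m"
  shows "y^m / fact m \<le> (1/2::real)^m"
proof -
  have "(6*y)^m / fact m \<le> exp (6*y)" using y by (intro pow_fact_le_exp) auto
  also have "\<dots> \<le> exp (real m)" using ym by simp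
  also have "\<dots> = exp 1 ^ m" by (simp add: exp_of_nat_mult[symmetric])
  also have "\<dots> \<le> 3 ^ m" using exp_le by (intro power_mono) auto
  finally have "6^m * (y^m / fact m) \<le> 3^m" by (simp add: power_mult_distrib)
  then have "y^m / fact m \<le> 3^m / 6^m" by (simp add: field_simps)
  also have "(3::real)^m / 6^m = (1/2)^m" by (simp add: power_divide[symmetric])
  finally show ?thesis .
qed

lemma choose_bound:
  assumes "0 \<le> (q::real)"
  shows "real (n choose m) * q^m \<le> (real n * q)^m / fact m"
proof -
  have "real ((n choose m) * fact m) \<le> real (n ^ m)"
    using binomial_fact_pow[of n m] by linarith
  then have "real (n choose m) * fact m \<le> real n ^ m" by simp
  then have "real (n choose m) \<le> real n ^ m / fact m" by (simp add: field_simps)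
  then have "real (n choose m) * q^m \<le> real n ^ m / fact m * q^m"
    using assms by (intro mult_right_mono) auto
  then show ?thesis by (simp add: power_mult_distrib)
qed

lemma geo_summable: "summable (\<lambda>w::nat. real w ^2 * (1/2::real)^w)"
proof (rule summable_ratio_test[where c="3/4" and N=5])
  fix n :: nat assume n: "5 \<le> n"
  have h5: "real n \<ge> 5" using n by simp
  have nn: "real n * real n \<ge> 5 * real n" using h5 by (intro mult_right_mono) auto
  have sq: "real (Suc n)^2 = real n * real n + 2 * real n + 1"
    by (simp add: power2_eq_square algebra_simps)
  have key: "real (Suc n)^2 / 2 \<le> 3/4 * real n ^ 2"
    using nn h5 by (simp add: power2_eq_square algebra_simps, linarith)
  have hp: "(0::real) \<le> (1/2)^n" by simp
  have "real (Suc n) ^ 2 * (1/2::real) ^ Suc n = (real (Suc n)^2 / 2) * (1/2)^n" by simp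
  also have "\<dots> \<le> (3/4 * real n ^ 2) * (1/2)^n" by (rule mult_right_mono[OF key hp])
  finally show "norm (real (Suc n) ^ 2 * (1/2::real) ^ Suc n) \<le> 3/4 * norm (real n ^ 2 * (1/2) ^ n)"
    by simp
qed simp

lemma ui_tail:
  fixes h :: "'b \<Rightarrow> real"
  assumes hm: "h \<in> borel_measurable N" and hnn: "\<And>x. 0 \<le> h x"
    and fin: "(\<integral>\<^sup>+ x. ennreal (h x) \<partial>N) < \<infinity>" and e: "(\<epsilon>::real) > 0"
  shows "\<exists>K. (\<integral>\<^sup>+ x. ennreal (h x * indicator {x. h x > K} x) \<partial>N) \<le> ennreal \<epsilon>"
proof -
  let ?u = "\<lambda>i x. ennreal (h x * indicator {x. h x > real i} x)"
  have lim: "(\<lambda>i. integral\<^sup>N N (?u i)) \<longlonglongrightarrow> integral\<^sup>N N (\<lambda>x. 0)"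
  proof (rule nn_integral_dominated_convergence[where w="\<lambda>x. ennreal (h x)"])
    show "\<And>i. ?u i \<in> borel_measurable N" using hm by measurable
    show "(\<lambda>x. 0) \<in> borel_measurable N" by simp
    show "(\<lambda>x. ennreal (h x)) \<in> borel_measurable N" using hm by measurable
    show "\<And>j. AE x in N. ?u j x \<le> ennreal (h x)"
      using hnn by (intro AE_I2) (auto simp: indicator_def)
    show "integral\<^sup>N N (\<lambda>x. ennreal (h x)) < \<infinity>" using fin .
    show "AE x in N. (\<lambda>i. ?u i x) \<longlonglongrightarrow> 0"
    proof (rule AE_I2)
      fix x
      obtain k :: nat where k: "h x < real k" using reals_Archimedean2 by blast
      have "eventually (\<lambda>i. ?u i x = 0) sequentially"
        unfolding eventually_sequentially
        using k by (intro exI[of _ k]) (auto simp: indicator_def)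
      then show "(\<lambda>i. ?u i x) \<longlonglongrightarrow> 0" by (simp add: tendsto_eventually)
    qed
  qed
  then have "(\<lambda>i. integral\<^sup>N N (?u i)) \<longlonglongrightarrow> 0" by simp
  moreover have "(0::ennreal) < ennreal \<epsilon>" using e by simp
  ultimately have "eventually (\<lambda>i. integral\<^sup>N N (?u i) < ennreal \<epsilon>) sequentially"
    by (rule order_tendstoD)
  then obtain N0 where "\<forall>i\<ge>N0. integral\<^sup>N N (?u i) < ennreal \<epsilon>"
    unfolding eventually_sequentially by blast
  then obtain i where "integral\<^sup>N N (?u i) < ennreal \<epsilon>" by blast
  then show ?thesis by (intro exI[of _ "real i"]) simp
qed
lemma F_incr_bound:
  fixes F fT :: "real \<Rightarrow> real"
  assumes F_neg: "\<And>x. x < 0 \<Longrightarrow> F x = 0"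
    and A1_dens: "\<And>x. x \<ge> 0 \<Longrightarrow> (fT has_integral F x) {0..x}"
    and A1_cont: "continuous_on {0..} fT"
    and A5: "\<And>x. x \<ge> 0 \<Longrightarrow> fT x \<le> fT 0"
    and A1_pos: "\<And>x. x \<ge> 0 \<Longrightarrow> fT x > 0"
    and cb: "c \<le> b"
  shows "F b - F c \<le> fT 0 * (b - c)"
proof -
  have f0: "fT 0 > 0" using A1_pos[of 0] by simp
  have bnd: "\<And>u v I. 0 \<le> u \<Longrightarrow> u \<le> v \<Longrightarrow> (fT has_integral I) {u..v} \<Longrightarrow> I \<le> fT 0 * (v - u)"
  proof -
    fix u v I assume uv: "0 \<le> u" "u \<le> v" and I: "(fT has_integral I) {u..v}"
    have "((\<lambda>x. fT 0) has_integral (fT 0 * (v - u))) {u..v}"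
      using has_integral_const_real[of "fT 0" u v] uv by (simp add: mult.commute)
    then show "I \<le> fT 0 * (v - u)"
      by (rule has_integral_le[OF I]) (use uv A5 in auto)
  qed
  show ?thesis
  proof (cases "b < 0")
    case True then show ?thesis using cb F_neg f0 by simp
  next
    case b: False
    show ?thesis
    proof (cases "c < 0")
      case True
      have "F b \<le> fT 0 * (b - 0)" using bnd[OF _ _ A1_dens[of b]] b by simp
      moreover have "fT 0 * b \<le> fT 0 * (b - c)" using True f0 by (intro mult_left_mono) auto
      ultimately show ?thesis using F_neg[OF True] by simp
    next
      case c: False
      have "fT integrable_on {c..b}"
        by (rule integrable_continuous_interval, rule continuous_on_subset[OF A1_cont]) (use c in auto)
      then obtain J where J: "(fT has_integral J) {c..b}" by blast
      have "(fT has_integral (F c + J)) {0..b}"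
        by (rule has_integral_combine[OF _ _ A1_dens[of c] J]) (use c cb in auto)
      then have "F b = F c + J" using b by (intro has_integral_unique[OF A1_dens[of b]]) auto
      moreover have "J \<le> fT 0 * (b - c)" using bnd[OF _ cb J] c by simp
      ultimately show ?thesis by simp
    qed
  qed
qed



lemma arr_sub: "arrivals n \<beta> t s \<nu> k \<subseteq> {i\<in>{1..n}. Sig n \<beta> s (k-1) \<le> t i \<and> t i \<le> Sig n \<beta> s k}"
  unfolding arrivals_def by auto

lemma Sig_cong: "(\<And>j. j \<in> {1..k} \<Longrightarrow> s j = s' j) \<Longrightarrow> k' \<le> k \<Longrightarrow> Sig n \<beta> s k' = Sig n \<beta> s' k'"
  unfolding Sig_def svc_D_def by (intro sum.cong) auto

lemma Sig_diff: "k \<ge> 1 \<Longrightarrow> Sig n \<beta> s k - Sig n \<beta> s (k-1) = svc_D n \<beta> s k"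
proof -
  assume "k \<ge> 1"
  then obtain k' where k': "k = Suc k'" by (cases k) auto
  show ?thesis unfolding Sig_def k' by simp
qed

lemma svc_bound:
  assumes n: "n \<ge> 1"
  shows "real n * max 0 (svc_D n \<beta> s k) \<le> \<bar>s k\<bar> * (1 + \<bar>\<beta>\<bar>)"
proof -
  have p0: "0 \<le> real n powr (-1/3)" by simp
  have q1: "1 \<le> real n powr (1/3)" using n by (intro ge_one_powr_ge_zero) auto
  have "real n powr (-1/3) = inverse (real n powr (1/3))"
    using powr_minus[of "real n" "1/3"] by simp
  then have p1: "real n powr (-1/3) \<le> 1" using q1 by (simp add: inverse_le_1_iff)
  have c: "\<bar>1 + \<beta> * real n powr (-1/3)\<bar> \<le> 1 + \<bar>\<beta>\<bar>"
  proof -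
    have "\<bar>\<beta> * real n powr (-1/3)\<bar> \<le> \<bar>\<beta>\<bar>"
      using p0 p1 by (simp add: abs_mult mult_left_le)
    then show ?thesis by linarith
  qed
  have "real n * svc_D n \<beta> s k = s k * (1 + \<beta> * real n powr (-1/3))"
    using n unfolding svc_D_def by simp
  also have "\<dots> \<le> \<bar>s k\<bar> * \<bar>1 + \<beta> * real n powr (-1/3)\<bar>" by (simp add: abs_mult[symmetric])
  also have "\<dots> \<le> \<bar>s k\<bar> * (1 + \<bar>\<beta>\<bar>)" using c by (intro mult_left_mono) auto
  finally show ?thesis by (cases "svc_D n \<beta> s k \<le> 0") (auto simp: max_def)
qed


lemma (in prob_space) tail_bound:
  fixes T S :: "nat \<Rightarrow> 'a \<Rightarrow> real"
  assumes measT: "\<And>i. T i \<in> borel_measurable M" and measS: "\<And>j. S j \<in> borel_measurable M"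
    and indep: "indep_vars (\<lambda>_. borel) (case_sum T S) ({1..} <+> {1..})"
    and intv: "\<And>i lo hi. i \<ge> 1 \<Longrightarrow> prob {\<omega> \<in> space M. lo \<le> T i \<omega> \<and> T i \<omega> \<le> hi} \<le> f0 * max 0 (hi - lo)"
    and f0: "f0 > 0" and n: "n \<ge> 1" and k: "k \<ge> 1" and m: "m \<ge> 1"
  shows "emeasure M {\<omega> \<in> space M. m \<le> arr_count n \<beta> (\<lambda>i. T i \<omega>) (\<lambda>j. S j \<omega>) k}
     \<le> ennreal ((1/2)^m + (1 - (1/2)^m) * prob {\<omega> \<in> space M. real m \<le> 6 * (f0 * (1 + \<bar>\<beta>\<bar>)) * \<bar>S k \<omega>\<bar>})"
proof -
  define a where "a = f0 * (1 + \<bar>\<beta>\<bar>)"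
  define AA where "AA = (Inl ` {1..n} :: (nat + nat) set)"
  define BB where "BB = (Inr ` {1..k} :: (nat + nat) set)"
  define Z where "Z = case_sum T S"
  define Yv where "Yv = (\<lambda>\<omega>. restrict (\<lambda>i. Z i \<omega>) BB)"
  define Xv where "Xv = (\<lambda>\<omega>. restrict (\<lambda>i. Z i \<omega>) AA)"
  define MB where "MB = PiM BB (\<lambda>_. borel :: real measure)"
  define MA where "MA = PiM AA (\<lambda>_. borel :: real measure)"
  define PS where "PS = distr M MB Yv"
  define PT where "PT = distr M MA Xv"
  have ind: "indep_var MB Yv MA Xv"
    unfolding MB_def MA_def Yv_def Xv_def
    by (rule indep_var_restrict[OF indep[folded Z_def]]) (auto simp: AA_def BB_def)
  have Yvm: "Yv \<in> measurable M MB" using indep_var_rv1[OF ind] .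
  have Xvm: "Xv \<in> measurable M MA" using indep_var_rv2[OF ind] .
  have joint: "PS \<Otimes>\<^sub>M PT = distr M (MB \<Otimes>\<^sub>M MA) (\<lambda>\<omega>. (Yv \<omega>, Xv \<omega>))"
    using ind unfolding indep_var_distribution_eq PS_def PT_def by simp
  define lo where "lo = (\<lambda>y::nat+nat\<Rightarrow>real. Sig n \<beta> (\<lambda>j. y (Inr j)) (k - 1))"
  define hi where "hi = (\<lambda>y::nat+nat\<Rightarrow>real. Sig n \<beta> (\<lambda>j. y (Inr j)) k)"
  define Js where "Js = {J. J \<subseteq> {1..n} \<and> card J = m}"
  have finJs: "finite Js" unfolding Js_def by (rule finite_subset[of _ "Pow {1..n}"]) auto
  define E where "E = {p \<in> space (MB \<Otimes>\<^sub>M MA). \<exists>J\<in>Js. \<forall>i\<in>J. lo (fst p) \<le> snd p (Inl i) \<and> snd p (Inl i) \<le> hi (fst p)}"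
  have compB: "\<And>j. j \<in> {1..k} \<Longrightarrow> (\<lambda>y. y (Inr j)) \<in> borel_measurable MB"
    unfolding MB_def BB_def by (rule measurable_component_singleton) auto
  have compA: "\<And>i. i \<in> {1..n} \<Longrightarrow> (\<lambda>x. x (Inl i)) \<in> borel_measurable MA"
    unfolding MA_def AA_def by (rule measurable_component_singleton) auto
  have lom: "lo \<in> borel_measurable MB"
    unfolding lo_def Sig_def svc_D_def
    by (intro borel_measurable_sum borel_measurable_times borel_measurable_divide borel_measurable_const compB) auto
  have him: "hi \<in> borel_measurable MB"
    unfolding hi_def Sig_def svc_D_def
    by (intro borel_measurable_sum borel_measurable_times borel_measurable_divide borel_measurable_const compB) auto
  have lof: "(\<lambda>p. lo (fst p)) \<in> borel_measurable (MB \<Otimes>\<^sub>M MA)"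
    by (rule measurable_compose[OF measurable_fst lom])
  have hif: "(\<lambda>p. hi (fst p)) \<in> borel_measurable (MB \<Otimes>\<^sub>M MA)"
    by (rule measurable_compose[OF measurable_fst him])
  have xs: "\<And>i. i \<in> {1..n} \<Longrightarrow> (\<lambda>p. snd p (Inl i)) \<in> borel_measurable (MB \<Otimes>\<^sub>M MA)"
    by (rule measurable_compose[OF measurable_snd compA])
  have Esets: "E \<in> sets (MB \<Otimes>\<^sub>M MA)"
    unfolding E_def
  proof (rule sets.sets_Collect_finite_Ex[OF _ finJs])
    fix J assume J: "J \<in> Js"
    then have fJ: "finite J" and sJ: "J \<subseteq> {1..n}" unfolding Js_def by (auto intro: finite_subset)
    show "{p \<in> space (MB \<Otimes>\<^sub>M MA). \<forall>i\<in>J. lo (fst p) \<le> snd p (Inl i) \<and> snd p (Inl i) \<le> hi (fst p)} \<in> sets (MB \<Otimes>\<^sub>M MA)"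
    proof (rule sets.sets_Collect_finite_All[OF _ fJ])
      fix i assume "i \<in> J"
      then have i: "i \<in> {1..n}" using sJ by auto
      show "{p \<in> space (MB \<Otimes>\<^sub>M MA). lo (fst p) \<le> snd p (Inl i) \<and> snd p (Inl i) \<le> hi (fst p)} \<in> sets (MB \<Otimes>\<^sub>M MA)"
        using sets.sets_Collect_conj[OF borel_measurable_le[OF xs[OF i] hif] borel_measurable_le[OF lof xs[OF i]]] .
    qed
  qed
  have loY: "\<And>\<omega>. lo (Yv \<omega>) = Sig n \<beta> (\<lambda>j. S j \<omega>) (k - 1)"
    unfolding lo_def by (rule Sig_cong[where k=k]) (auto simp: Yv_def BB_def Z_def)
  have hiY: "\<And>\<omega>. hi (Yv \<omega>) = Sig n \<beta> (\<lambda>j. S j \<omega>) k"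
    unfolding hi_def by (rule Sig_cong[where k=k]) (auto simp: Yv_def BB_def Z_def)
  have sub: "{\<omega> \<in> space M. m \<le> arr_count n \<beta> (\<lambda>i. T i \<omega>) (\<lambda>j. S j \<omega>) k}
       \<subseteq> (\<lambda>\<omega>. (Yv \<omega>, Xv \<omega>)) -` E \<inter> space M"
  proof (rule subsetI)
    fix \<omega> assume "\<omega> \<in> {\<omega> \<in> space M. m \<le> arr_count n \<beta> (\<lambda>i. T i \<omega>) (\<lambda>j. S j \<omega>) k}"
    then have \<omega>: "\<omega> \<in> space M" and mle: "m \<le> arr_count n \<beta> (\<lambda>i. T i \<omega>) (\<lambda>j. S j \<omega>) k" by auto
    let ?Ar = "arrivals n \<beta> (\<lambda>i. T i \<omega>) (\<lambda>j. S j \<omega>) (fst (qstate n \<beta> (\<lambda>i. T i \<omega>) (\<lambda>j. S j \<omega>) (k - 1))) k"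
    have Arsub: "?Ar \<subseteq> {i\<in>{1..n}. Sig n \<beta> (\<lambda>j. S j \<omega>) (k-1) \<le> T i \<omega> \<and> T i \<omega> \<le> Sig n \<beta> (\<lambda>j. S j \<omega>) k}"
      by (rule arr_sub)
    have "m \<le> card ?Ar" using mle unfolding arr_count_def .
    then obtain J where J: "J \<subseteq> ?Ar" "card J = m" "finite J" by (rule obtain_subset_with_card_n)
    have JJs: "J \<in> Js" using J Arsub unfolding Js_def by auto
    have sp: "(Yv \<omega>, Xv \<omega>) \<in> space (MB \<Otimes>\<^sub>M MA)"
      using measurable_space[OF Yvm \<omega>] measurable_space[OF Xvm \<omega>] by (simp add: space_pair_measure)
    have "\<forall>i\<in>J. lo (Yv \<omega>) \<le> Xv \<omega> (Inl i) \<and> Xv \<omega> (Inl i) \<le> hi (Yv \<omega>)"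
    proof
      fix i assume "i \<in> J"
      then have "i \<in> {1..n}" "Sig n \<beta> (\<lambda>j. S j \<omega>) (k-1) \<le> T i \<omega> \<and> T i \<omega> \<le> Sig n \<beta> (\<lambda>j. S j \<omega>) k"
        using J(1) Arsub by auto
      then show "lo (Yv \<omega>) \<le> Xv \<omega> (Inl i) \<and> Xv \<omega> (Inl i) \<le> hi (Yv \<omega>)"
        unfolding loY hiY by (simp add: Xv_def AA_def Z_def)
    qed
    then have "(Yv \<omega>, Xv \<omega>) \<in> E" using sp JJs unfolding E_def by auto
    then show "\<omega> \<in> (\<lambda>\<omega>. (Yv \<omega>, Xv \<omega>)) -` E \<inter> space M" using \<omega> by simp
  qed
  define C where "C = {y \<in> space PS. real m \<le> 6 * a * \<bar>y (Inr k)\<bar>}"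
  define g where "g = (\<lambda>y. ennreal ((1/2)^m) + ennreal (1 - (1/2)^m) * indicator C y)"
  have PTprob: "prob_space PT" unfolding PT_def by (rule prob_space_distr[OF Xvm])
  have sect: "\<And>y. y \<in> space PS \<Longrightarrow> emeasure PT (Pair y -` E) \<le> g y"
  proof -
    fix y assume y: "y \<in> space PS"
    have h: "(1/2::real)^m \<le> 1" by (simp add: power_le_one)
    show "emeasure PT (Pair y -` E) \<le> g y"
    proof (cases "y \<in> C")
      case True
      then have "g y = ennreal ((1/2)^m) + ennreal (1-(1/2)^m)" by (simp add: g_def)
      also have "\<dots> = ennreal ((1/2)^m + (1 - (1/2)^m))" using h by (intro ennreal_plus[symmetric]) auto
      also have "\<dots> = 1" by simp
      finally show ?thesis using prob_space.emeasure_le_1[OF PTprob] by simp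
    next
      case False
      then have ylt: "6*a*\<bar>y (Inr k)\<bar> < real m" using y by (auto simp: C_def)
      have gy: "g y = ennreal ((1/2)^m)" using False by (simp add: g_def)
      define q where "q = f0 * max 0 (hi y - lo y)"
      have q0: "0 \<le> q" using f0 by (simp add: q_def)
      define Cj where "Cj J = {x \<in> space MA. \<forall>i\<in>J. lo y \<le> x (Inl i) \<and> x (Inl i) \<le> hi y}" for J
      have secsub: "Pair y -` E \<subseteq> (\<Union>J\<in>Js. Cj J)"
        by (auto simp: E_def Cj_def space_pair_measure)
      have Cjsets: "\<And>J. J\<in>Js \<Longrightarrow> Cj J \<in> sets PT"
      proof -
        fix J assume J: "J \<in> Js"
        then have fJ: "finite J" and sJ: "J \<subseteq> {1..n}" unfolding Js_def by (auto intro: finite_subset)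
        have "Cj J \<in> sets MA"
          unfolding Cj_def
        proof (rule sets.sets_Collect_finite_All[OF _ fJ])
          fix i assume "i \<in> J"
          then have i: "i \<in> {1..n}" using sJ by auto
          show "{x \<in> space MA. lo y \<le> x (Inl i) \<and> x (Inl i) \<le> hi y} \<in> sets MA"
            using sets.sets_Collect_conj[OF borel_measurable_le[OF compA[OF i] borel_measurable_const] borel_measurable_le[OF borel_measurable_const compA[OF i]]] .
        qed
        then show "Cj J \<in> sets PT" by (simp add: PT_def)
      qed
      have CjM: "\<And>J. J \<in> Js \<Longrightarrow> emeasure PT (Cj J) \<le> ennreal (q^m)"
      proof -
        fix J assume J: "J \<in> Js"
        then have fJ: "finite J" and sJ: "J \<subseteq> {1..n}" and cJ: "card J = m"
          unfolding Js_def by (auto intro: finite_subset)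
        have Jne: "J \<noteq> {}" using cJ m by auto
        have "emeasure PT (Cj J) = emeasure M (Xv -` Cj J \<inter> space M)"
          unfolding PT_def by (rule emeasure_distr[OF Xvm]) (use Cjsets[OF J] in \<open>simp add: PT_def\<close>)
        also have "Xv -` Cj J \<inter> space M = (\<Inter>i\<in>Inl ` J. Z i -` {lo y..hi y} \<inter> space M)"
          using measurable_space[OF Xvm] Jne sJ by (auto simp: Cj_def Xv_def AA_def Z_def)
        also have "emeasure M \<dots> = ennreal (prob (\<Inter>i\<in>Inl ` J. Z i -` {lo y..hi y} \<inter> space M))"
          by (rule emeasure_eq_measure)
        also have "prob (\<Inter>i\<in>Inl ` J. Z i -` {lo y..hi y} \<inter> space M) = (\<Prod>i\<in>Inl ` J. prob (Z i -` {lo y..hi y} \<inter> space M))"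
          by (rule indep_varsD[OF indep[folded Z_def]]) (use Jne fJ sJ in auto)
        also have "\<dots> = (\<Prod>i\<in>J. prob {\<omega> \<in> space M. lo y \<le> T i \<omega> \<and> T i \<omega> \<le> hi y})"
          by (subst prod.reindex) (auto simp: Z_def intro!: prod.cong arg_cong[where f=prob])
        also have "\<dots> \<le> (\<Prod>i\<in>J. q)"
          by (rule prod_mono) (use intv sJ in \<open>auto simp: q_def\<close>)
        also have "\<dots> = q^m" using cJ by simp
        finally show "emeasure PT (Cj J) \<le> ennreal (q^m)" by (simp add: ennreal_leI)
      qed
      have "emeasure PT (Pair y -` E) \<le> emeasure PT (\<Union>J\<in>Js. Cj J)"
        by (rule emeasure_mono[OF secsub]) (use Cjsets finJs in auto)
      also have "\<dots> \<le> (\<Sum>J\<in>Js. emeasure PT (Cj J))"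
        by (rule emeasure_subadditive_finite[OF finJs]) (use Cjsets in auto)
      also have "\<dots> \<le> (\<Sum>J\<in>Js. ennreal (q^m))" by (rule sum_mono) (rule CjM)
      also have "\<dots> = ennreal (real (card Js) * q^m)"
        using q0 by (simp add: ennreal_of_nat_eq_real_of_nat ennreal_mult)
      also have "card Js = n choose m" unfolding Js_def using n_subsets[of "{1..n}" m] by simp
      also have "real (n choose m) * q^m \<le> (1/2)^m"
      proof -
        have d: "hi y - lo y = svc_D n \<beta> (\<lambda>j. y (Inr j)) k"
          unfolding hi_def lo_def using Sig_diff[OF k] .
        have "real n * q = f0 * (real n * max 0 (hi y - lo y))" by (simp add: q_def)
        also have "\<dots> \<le> f0 * (\<bar>y (Inr k)\<bar> * (1 + \<bar>\<beta>\<bar>))"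
          unfolding d using svc_bound[OF n] f0 by (intro mult_left_mono) auto
        also have "\<dots> = a * \<bar>y (Inr k)\<bar>" by (simp add: a_def)
        finally have nq: "real n * q \<le> a * \<bar>y (Inr k)\<bar>" .
        have "real (n choose m) * q^m \<le> (real n * q)^m / fact m" by (rule choose_bound[OF q0])
        also have "\<dots> \<le> (a * \<bar>y (Inr k)\<bar>)^m / fact m"
          using nq q0 by (intro divide_right_mono power_mono) auto
        also have "\<dots> \<le> (1/2)^m"
          using ylt f0 by (intro pow_fact_half) (auto simp: a_def)
        finally show ?thesis .
      qed
      then have "ennreal (real (n choose m) * q^m) \<le> ennreal ((1/2)^m)" by (rule ennreal_leI)
      finally show ?thesis unfolding gy .
    qed
  qed
  have Csets: "C \<in> sets PS"
  proof -
    have "(\<lambda>y. real m) \<in> borel_measurable PS" by simp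
    moreover have "(\<lambda>y. 6 * a * \<bar>y (Inr k)\<bar>) \<in> borel_measurable PS"
      unfolding PS_def using compB[of k] k by (intro borel_measurable_times borel_measurable_abs borel_measurable_const) simp_all
    ultimately show ?thesis unfolding C_def by (rule borel_measurable_le)
  qed
  have PSprob: "prob_space PS" unfolding PS_def by (rule prob_space_distr[OF Yvm])
  have Cm: "emeasure PS C = emeasure M {\<omega> \<in> space M. real m \<le> 6 * a * \<bar>S k \<omega>\<bar>}"
  proof -
    have "emeasure PS C = emeasure M (Yv -` C \<inter> space M)"
      unfolding PS_def by (rule emeasure_distr[OF Yvm]) (use Csets in \<open>simp add: PS_def\<close>)
    also have "Yv -` C \<inter> space M = {\<omega> \<in> space M. real m \<le> 6 * a * \<bar>S k \<omega>\<bar>}"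
      using measurable_space[OF Yvm] k by (auto simp: C_def PS_def Yv_def BB_def Z_def)
    finally show ?thesis .
  qed
  have "emeasure M {\<omega> \<in> space M. m \<le> arr_count n \<beta> (\<lambda>i. T i \<omega>) (\<lambda>j. S j \<omega>) k}
      \<le> emeasure M ((\<lambda>\<omega>. (Yv \<omega>, Xv \<omega>)) -` E \<inter> space M)"
    by (rule emeasure_mono[OF sub]) (use Esets Yvm Xvm in measurable)
  also have "\<dots> = emeasure (PS \<Otimes>\<^sub>M PT) E"
    unfolding joint by (rule emeasure_distr[symmetric]) (use Esets Yvm Xvm in measurable)
  also have "\<dots> = (\<integral>\<^sup>+ y. emeasure PT (Pair y -` E) \<partial>PS)"
  proof (rule sigma_finite_measure.emeasure_pair_measure_alt)
    show "sigma_finite_measure PT" using PTprob by (simp add: prob_space_imp_sigma_finite)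
    have "sets (PS \<Otimes>\<^sub>M PT) = sets (MB \<Otimes>\<^sub>M MA)"
      by (rule sets_pair_measure_cong) (simp_all add: PS_def PT_def)
    then show "E \<in> sets (PS \<Otimes>\<^sub>M PT)" using Esets by simp
  qed
  also have "\<dots> \<le> (\<integral>\<^sup>+ y. g y \<partial>PS)"
    by (rule nn_integral_mono) (rule sect)
  also have "\<dots> = ennreal ((1/2)^m) + ennreal (1 - (1/2)^m) * emeasure PS C"
  proof -
    have "(\<integral>\<^sup>+ y. g y \<partial>PS) = (\<integral>\<^sup>+ y. ennreal ((1/2)^m) \<partial>PS) + (\<integral>\<^sup>+ y. ennreal (1 - (1/2)^m) * indicator C y \<partial>PS)"
      unfolding g_def by (rule nn_integral_add) (use Csets in auto)
    also have "\<dots> = ennreal ((1/2)^m) + ennreal (1 - (1/2)^m) * emeasure PS C"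
      using Csets prob_space.emeasure_space_1[OF PSprob] by (simp add: nn_integral_cmult_indicator)
    finally show ?thesis .
  qed
  also have "\<dots> = ennreal ((1/2)^m + (1 - (1/2)^m) * prob {\<omega> \<in> space M. real m \<le> 6 * a * \<bar>S k \<omega>\<bar>})"
  proof -
    let ?p = "prob {\<omega> \<in> space M. real m \<le> 6 * a * \<bar>S k \<omega>\<bar>}"
    have h: "(1/2::real)^m \<le> 1" by (simp add: power_le_one)
    have "ennreal (1 - (1/2)^m) * ennreal ?p = ennreal ((1 - (1/2)^m) * ?p)"
      using h by (intro ennreal_mult[symmetric]) auto
    moreover have "ennreal ((1/2)^m + (1 - (1/2)^m) * ?p) = ennreal ((1/2)^m) + ennreal ((1 - (1/2)^m) * ?p)"
      using h by (intro ennreal_plus) auto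
    ultimately show ?thesis unfolding Cm emeasure_eq_measure by simp
  qed
  finally show ?thesis unfolding a_def .
qed



lemma Sig_meas:
  assumes measS: "\<And>j. S j \<in> borel_measurable M"
  shows "(\<lambda>\<omega>. Sig n \<beta> (\<lambda>j. S j \<omega>) k) \<in> borel_measurable M"
  unfolding Sig_def svc_D_def using measS by measurable

lemma arrivals_meas:
  assumes measT: "\<And>i. T i \<in> borel_measurable M" and measS: "\<And>j. S j \<in> borel_measurable M"
  shows "(\<lambda>\<omega>. arrivals n \<beta> (\<lambda>i. T i \<omega>) (\<lambda>j. S j \<omega>) \<nu> k) \<in> measurable M (count_space (Pow {1..n}))"
proof (rule measurable_count_space_eq_countable[THEN iffD2], safe)
  show "countable (Pow {1..n})" by (auto intro: countable_finite)
  fix \<omega> x assume "x \<in> arrivals n \<beta> (\<lambda>i. T i \<omega>) (\<lambda>j. S j \<omega>) \<nu> k"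
  then show "x \<in> {1..n}" unfolding arrivals_def by auto
next
  fix B assume B: "B \<subseteq> {1..n}"
  note [measurable] = Sig_meas[OF measS] measT
  have "(\<lambda>\<omega>. arrivals n \<beta> (\<lambda>i. T i \<omega>) (\<lambda>j. S j \<omega>) \<nu> k) -` {B} \<inter> space M =
     {\<omega> \<in> space M. \<forall>i\<in>{1..n}. (i \<in> B \<longleftrightarrow> (i \<notin> \<nu> \<and> Sig n \<beta> (\<lambda>j. S j \<omega>) (k - 1) \<le> T i \<omega> \<and> T i \<omega> \<le> Sig n \<beta> (\<lambda>j. S j \<omega>) k))}"
  proof -
    have eq: "(arrivals n \<beta> (\<lambda>i. T i \<omega>) (\<lambda>j. S j \<omega>) \<nu> k = B) \<longleftrightarrow>
      (\<forall>i\<in>{1..n}. (i \<in> B \<longleftrightarrow> (i \<notin> \<nu> \<and> Sig n \<beta> (\<lambda>j. S j \<omega>) (k - 1) \<le> T i \<omega> \<and> T i \<omega> \<le> Sig n \<beta> (\<lambda>j. S j \<omega>) k)))" for \<omega>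
    proof -
      have A: "arrivals n \<beta> (\<lambda>i. T i \<omega>) (\<lambda>j. S j \<omega>) \<nu> k = {i\<in>{1..n}. i \<notin> \<nu> \<and> Sig n \<beta> (\<lambda>j. S j \<omega>) (k - 1) \<le> T i \<omega> \<and> T i \<omega> \<le> Sig n \<beta> (\<lambda>j. S j \<omega>) k}"
        by (simp add: arrivals_def)
      show ?thesis unfolding A using B by blast
    qed
    show ?thesis using eq by auto
  qed
  also have "\<dots> \<in> sets M" by measurable
  finally show "(\<lambda>\<omega>. arrivals n \<beta> (\<lambda>i. T i \<omega>) (\<lambda>j. S j \<omega>) \<nu> k) -` {B} \<inter> space M \<in> sets M" .
qed

lemma least_char:
  assumes ex: "\<exists>i. Q (i::nat)"
  shows "(LEAST i. Q i) = i0 \<longleftrightarrow> Q i0 \<and> (\<forall>i\<in>{..<i0}. \<not> Q i)"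
proof
  assume "(LEAST i. Q i) = i0"
  then show "Q i0 \<and> (\<forall>i\<in>{..<i0}. \<not> Q i)"
    using LeastI_ex[OF ex] not_less_Least by auto
next
  assume h: "Q i0 \<and> (\<forall>i\<in>{..<i0}. \<not> Q i)"
  show "(LEAST i. Q i) = i0"
    by (rule Least_equality) (use h in \<open>auto simp: not_less[symmetric]\<close>)
qed

lemma pick_min_meas:
  assumes measT: "\<And>i. T i \<in> borel_measurable M" and P: "P \<subseteq> {1..n}"
  shows "(\<lambda>\<omega>. pick_min (\<lambda>i. T i \<omega>) P) \<in> measurable M (count_space (Pow {1..n}))"
proof (cases "P = {}")
  case True
  then show ?thesis by (simp add: pick_min_def)
next
  case Pne: False
  have finP: "finite P" using P by (rule finite_subset) auto
  define Q where "Q \<omega> i = (i \<in> P \<and> (\<forall>j\<in>P. T i \<omega> \<le> T j \<omega>))" for \<omega> i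
  have ex: "\<exists>i. Q \<omega> i" for \<omega>
  proof -
    let ?v = "Min ((\<lambda>j. T j \<omega>) ` P)"
    have "?v \<in> (\<lambda>j. T j \<omega>) ` P" using finP Pne by (intro Min_in) auto
    then obtain i where i: "i \<in> P" "T i \<omega> = ?v" by auto
    have "\<forall>j\<in>P. T i \<omega> \<le> T j \<omega>" using i finP by auto
    then show ?thesis using i unfolding Q_def by auto
  qed
  have pm: "pick_min (\<lambda>i. T i \<omega>) P = {LEAST i. Q \<omega> i}" for \<omega>
    using Pne unfolding pick_min_def Q_def by simp
  show ?thesis
  proof (rule measurable_count_space_eq_countable[THEN iffD2], safe)
    show "countable (Pow {1..n})" by (auto intro: countable_finite)
    fix \<omega> x assume "x \<in> pick_min (\<lambda>i. T i \<omega>) P"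
    then have "x = (LEAST i. Q \<omega> i)" unfolding pm by simp
    then have "Q \<omega> x" using LeastI_ex[OF ex] by simp
    then show "x \<in> {1..n}" using P unfolding Q_def by auto
  next
    fix B assume B: "B \<subseteq> {1..n}"
    note [measurable] = measT
    have "(\<lambda>\<omega>. pick_min (\<lambda>i. T i \<omega>) P) -` {B} \<inter> space M =
      {\<omega> \<in> space M. \<exists>i0\<in>P. B = {i0} \<and> (i0 \<in> P \<and> (\<forall>j\<in>P. T i0 \<omega> \<le> T j \<omega>)) \<and>
          (\<forall>i\<in>{..<i0}. \<not> (i \<in> P \<and> (\<forall>j\<in>P. T i \<omega> \<le> T j \<omega>)))}"
    proof -
      have "\<And>\<omega>. pick_min (\<lambda>i. T i \<omega>) P = B \<longleftrightarrow> (\<exists>i0\<in>P. B = {i0} \<and> Q \<omega> i0 \<and> (\<forall>i\<in>{..<i0}. \<not> Q \<omega> i))"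
      proof -
        fix \<omega>
        show "pick_min (\<lambda>i. T i \<omega>) P = B \<longleftrightarrow> (\<exists>i0\<in>P. B = {i0} \<and> Q \<omega> i0 \<and> (\<forall>i\<in>{..<i0}. \<not> Q \<omega> i))"
        proof -
          have lc: "\<And>i0. (Least (Q \<omega>) = i0) \<longleftrightarrow> Q \<omega> i0 \<and> (\<forall>i\<in>{..<i0}. \<not> Q \<omega> i)"
            by (rule least_char[OF ex])
          have qL: "Q \<omega> (Least (Q \<omega>))" by (rule LeastI_ex[OF ex])
          have QP: "\<And>i. Q \<omega> i \<Longrightarrow> i \<in> P" by (simp add: Q_def)
          show ?thesis unfolding pm
          proof
            assume h: "{Least (Q \<omega>)} = B"
            have "Q \<omega> (Least (Q \<omega>)) \<and> (\<forall>i\<in>{..<Least (Q \<omega>)}. \<not> Q \<omega> i)" using lc[of "Least (Q \<omega>)"] by simp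
            then show "\<exists>i0\<in>P. B = {i0} \<and> Q \<omega> i0 \<and> (\<forall>i\<in>{..<i0}. \<not> Q \<omega> i)"
              using h QP by auto
          next
            assume "\<exists>i0\<in>P. B = {i0} \<and> Q \<omega> i0 \<and> (\<forall>i\<in>{..<i0}. \<not> Q \<omega> i)"
            then obtain i0 where "B = {i0}" "Q \<omega> i0 \<and> (\<forall>i\<in>{..<i0}. \<not> Q \<omega> i)" by blast
            then show "{Least (Q \<omega>)} = B" using lc by simp
          qed
        qed
      qed
      then show ?thesis unfolding Q_def by auto
    qed
    also have "\<dots> \<in> sets M" using finP by measurable
    finally show "(\<lambda>\<omega>. pick_min (\<lambda>i. T i \<omega>) P) -` {B} \<inter> space M \<in> sets M" .
  qed
qed


lemma qstate_meas:
  assumes measT: "\<And>i. T i \<in> borel_measurable M" and measS: "\<And>j. S j \<in> borel_measurable M"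
  shows "(\<lambda>\<omega>. qstate n \<beta> (\<lambda>i. T i \<omega>) (\<lambda>j. S j \<omega>) m) \<in> measurable M (count_space (Pow {1..n} \<times> UNIV))"
proof (induction m)
  case 0
  have "(\<lambda>\<omega>. (\<lambda>\<nu>. (\<nu>, 0::nat)) (pick_min (\<lambda>i. T i \<omega>) {1..n})) \<in> measurable M (count_space (Pow {1..n} \<times> UNIV))"
    by (rule measurable_compose[OF pick_min_meas[OF measT]]) auto
  then show ?case by simp
next
  case (Suc m)
  define H where "H p \<omega> = (let Arr = arrivals n \<beta> (\<lambda>i. T i \<omega>) (\<lambda>j. S j \<omega>) (fst p) (Suc m); a = card Arr
      in (fst p \<union> Arr \<union> (if snd p + a = 0 then pick_min (\<lambda>i. T i \<omega>) ({1..n} - (fst p \<union> Arr)) else {}),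
          snd p + a - 1))" for p :: "nat set \<times> nat" and \<omega>
  have eq: "qstate n \<beta> (\<lambda>i. T i \<omega>) (\<lambda>j. S j \<omega>) (Suc m) = H (qstate n \<beta> (\<lambda>i. T i \<omega>) (\<lambda>j. S j \<omega>) m) \<omega>" for \<omega>
    by (simp add: H_def Let_def)
  have Hm: "(\<lambda>\<omega>. H p \<omega>) \<in> measurable M (count_space (Pow {1..n} \<times> UNIV))" if p: "p \<in> Pow {1..n} \<times> UNIV" for p
  proof -
    define K where "K B \<omega> = (fst p \<union> B \<union> (if snd p + card B = 0 then pick_min (\<lambda>i. T i \<omega>) ({1..n} - (fst p \<union> B)) else {}),
          snd p + card B - 1)" for B :: "nat set" and \<omega>
    have Km: "(\<lambda>\<omega>. K B \<omega>) \<in> measurable M (count_space (Pow {1..n} \<times> UNIV))" if B: "B \<in> Pow {1..n}" for B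
    proof (cases "snd p + card B = 0")
      case True
      have "(\<lambda>\<omega>. (\<lambda>S'. (fst p \<union> B \<union> S', snd p + card B - 1)) (pick_min (\<lambda>i. T i \<omega>) ({1..n} - (fst p \<union> B)))) \<in> measurable M (count_space (Pow {1..n} \<times> UNIV))"
        by (rule measurable_compose[OF pick_min_meas[OF measT]]) (use p B in auto)
      then show ?thesis using True by (simp add: K_def)
    next
      case False
      have "(\<lambda>\<omega>. (fst p \<union> B \<union> {}, snd p + card B - 1)) \<in> measurable M (count_space (Pow {1..n} \<times> UNIV))"
        by (rule measurable_const) (use p B in auto)
      moreover have "\<And>\<omega>. K B \<omega> = (fst p \<union> B \<union> {}, snd p + card B - 1)"
        using False unfolding K_def by (simp only: if_False)
      ultimately show ?thesis by (simp only:)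
    qed
    have "(\<lambda>\<omega>. K (arrivals n \<beta> (\<lambda>i. T i \<omega>) (\<lambda>j. S j \<omega>) (fst p) (Suc m)) \<omega>) \<in> measurable M (count_space (Pow {1..n} \<times> UNIV))"
      by (rule measurable_compose_countable'[OF Km arrivals_meas[OF measT measS]]) (auto intro: countable_finite)
    then show ?thesis by (simp add: K_def H_def Let_def)
  qed
  have "(\<lambda>\<omega>. H (qstate n \<beta> (\<lambda>i. T i \<omega>) (\<lambda>j. S j \<omega>) m) \<omega>) \<in> measurable M (count_space (Pow {1..n} \<times> UNIV))"
    by (rule measurable_compose_countable'[OF Hm Suc.IH]) (auto intro: countable_finite)
  then show ?case unfolding eq .
qed

lemma arr_count_meas:
  assumes measT: "\<And>i. T i \<in> borel_measurable M" and measS: "\<And>j. S j \<in> borel_measurable M"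
  shows "(\<lambda>\<omega>. arr_count n \<beta> (\<lambda>i. T i \<omega>) (\<lambda>j. S j \<omega>) k) \<in> measurable M (count_space UNIV)"
proof -
  have Fm: "(\<lambda>\<omega>. card (arrivals n \<beta> (\<lambda>i. T i \<omega>) (\<lambda>j. S j \<omega>) (fst p) k)) \<in> measurable M (count_space UNIV)" for p :: "nat set \<times> nat"
    by (rule measurable_compose[OF arrivals_meas[OF measT measS]]) auto
  have "(\<lambda>\<omega>. (\<lambda>p. card (arrivals n \<beta> (\<lambda>i. T i \<omega>) (\<lambda>j. S j \<omega>) (fst p) k)) (qstate n \<beta> (\<lambda>i. T i \<omega>) (\<lambda>j. S j \<omega>) (k - 1))) \<in> measurable M (count_space UNIV)"
    by (rule measurable_compose_countable'[OF Fm qstate_meas[OF measT measS]]) (auto intro: countable_finite)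
  then show ?thesis by (simp add: arr_count_def)
qed



lemma (in prob_space) interval_bound:
  fixes X :: "'a \<Rightarrow> real" and F :: "real \<Rightarrow> real"
  assumes Xm: "X \<in> borel_measurable M"
    and cdf: "\<And>x. prob {\<omega> \<in> space M. X \<omega> \<le> x} = F x"
    and Finc: "\<And>c b. c \<le> b \<Longrightarrow> F b - F c \<le> f0 * (b - c)"
    and f0: "f0 > 0"
  shows "prob {\<omega> \<in> space M. lo \<le> X \<omega> \<and> X \<omega> \<le> hi} \<le> f0 * max 0 (hi - lo)"
proof (cases "hi < lo")
  case True
  then have em: "{\<omega> \<in> space M. lo \<le> X \<omega> \<and> X \<omega> \<le> hi} = {}" by auto
  show ?thesis unfolding em using True by simp
next
  case False
  show ?thesis
  proof (rule field_le_epsilon)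
    fix e :: real assume e: "0 < e"
    define d where "d = e / f0"
    have d: "d > 0" using e f0 by (simp add: d_def)
    have sub: "{\<omega> \<in> space M. lo \<le> X \<omega> \<and> X \<omega> \<le> hi} \<subseteq>
        {\<omega> \<in> space M. X \<omega> \<le> hi} - {\<omega> \<in> space M. X \<omega> \<le> lo - d}"
      using d by auto
    have m1: "{\<omega> \<in> space M. X \<omega> \<le> hi} \<in> events" using Xm by measurable
    have m2: "{\<omega> \<in> space M. X \<omega> \<le> lo - d} \<in> events" using Xm by measurable
    have "prob {\<omega> \<in> space M. lo \<le> X \<omega> \<and> X \<omega> \<le> hi} \<le>
        prob ({\<omega> \<in> space M. X \<omega> \<le> hi} - {\<omega> \<in> space M. X \<omega> \<le> lo - d})"
      by (rule finite_measure_mono[OF sub]) (use m1 m2 in auto)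
    also have "\<dots> = F hi - F (lo - d)"
      using finite_measure_Diff[OF m1 m2] d False cdf by force
    also have "\<dots> \<le> f0 * (hi - (lo - d))" using Finc[of "lo - d" hi] d False by simp
    also have "\<dots> = f0 * max 0 (hi - lo) + e" using False f0 by (simp add: d_def algebra_simps)
    finally show "prob {\<omega> \<in> space M. lo \<le> X \<omega> \<and> X \<omega> \<le> hi} \<le> f0 * max 0 (hi - lo) + e" .
  qed
qed

lemma geo_partial: "(\<Sum>w<m. (1/2::real)^w * (1/2)) = 1 - (1/2)^m"
  by (induction m) (auto simp: field_simps)


theorem mainTheorem13:
  fixes M :: "'a measure" and T S :: "nat \<Rightarrow> 'a \<Rightarrow> real"
    and F fT :: "real \<Rightarrow> real" and \<beta> :: real
  assumes "prob_space M"
    and meas: "\<And>i. T i \<in> borel_measurable M" "\<And>j. S j \<in> borel_measurable M"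
    and indep: "prob_space.indep_vars M (\<lambda>_. borel) (case_sum T S) ({1..} <+> {1..})"
    and cdfT: "\<And>i x. i \<ge> 1 \<Longrightarrow> measure M {\<omega> \<in> space M. T i \<omega> \<le> x} = F x"
    and Sid: "\<And>j. j \<ge> 1 \<Longrightarrow> distr M borel (S j) = distr M borel (S 1)"
    and Snonneg: "\<And>j. j \<ge> 1 \<Longrightarrow> AE \<omega> in M. S j \<omega> \<ge> 0"
    and S2: "integrable M (\<lambda>\<omega>. (S 1 \<omega>)\<^sup>2)"
    and F_neg: "\<And>x. x < 0 \<Longrightarrow> F x = 0"
    and A1_dens: "\<And>x. x \<ge> 0 \<Longrightarrow> (fT has_integral F x) {0..x}"
    and A1_cont: "continuous_on {0..} fT"
    and A1_pos: "\<And>x. x \<ge> 0 \<Longrightarrow> fT x > 0"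
    and A2: "\<And>xb. xb > 0 \<Longrightarrow>
       (\<lambda>x. F x - F xb - fT xb * (x - xb)) \<in> o[at xb](\<lambda>x. \<bar>x - xb\<bar> powr (4/3))"
    and A3: "\<And>C \<epsilon>. C > 0 \<Longrightarrow> \<epsilon> > 0 \<Longrightarrow>
       eventually (\<lambda>y. \<forall>xb \<in> {0..C * y powr (1/3)}.
          \<bar>F (xb + y) - F xb - fT xb * y\<bar> \<le> \<epsilon> * y) (at_right 0)"
    and A4: "\<exists>\<delta>>0. \<exists>f'. (\<forall>x\<in>{0..<\<delta>}. (fT has_real_derivative f' x) (at x within {0..}))
                        \<and> continuous_on {0..<\<delta>} f'"
    and A5: "\<And>x. x \<ge> 0 \<Longrightarrow> fT x \<le> fT 0"
  shows "\<forall>t>0. \<exists>\<mu> :: nat \<Rightarrow> real measure.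
           (\<forall>n\<ge>1. prob_space (\<mu> n) \<and> sets (\<mu> n) = sets borel \<and> emeasure (\<mu> n) {..<0} = 0)
         \<and> (\<forall>n\<ge>1. \<forall>k::nat. 1 \<le> k \<and> real k \<le> t * real n powr (2/3) \<longrightarrow>
              dominated_by_law M (\<lambda>\<omega>. real (arr_count n \<beta> (\<lambda>i. T i \<omega>) (\<lambda>j. S j \<omega>) k)) (\<mu> n))
         \<and> unif_integrable_laws {1..} (\<lambda>n. distr (\<mu> n) borel (\<lambda>x. x\<^sup>2))"
  proof -
  interpret prob_space M by fact
  define f0 where "f0 = fT 0"
  have f0: "f0 > 0" using A1_pos[of 0] by (simp add: f0_def)
  have Finc: "\<And>c b. c \<le> b \<Longrightarrow> F b - F c \<le> f0 * (b - c)"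
    unfolding f0_def by (rule F_incr_bound[OF F_neg A1_dens A1_cont A5 A1_pos])
  have intv: "\<And>i lo hi. i \<ge> 1 \<Longrightarrow> prob {\<omega> \<in> space M. lo \<le> T i \<omega> \<and> T i \<omega> \<le> hi} \<le> f0 * max 0 (hi - lo)"
    by (rule interval_bound[OF meas(1)]) (use cdfT Finc f0 in auto)
  define a where "a = f0 * (1 + \<bar>\<beta>\<bar>)"
  define Xs where "Xs \<omega> = 6 * a * \<bar>S 1 \<omega>\<bar>" for \<omega>
  define \<nu>X where "\<nu>X = distr M borel Xs"
  define G where "G = measure_pmf (geometric_pmf (1/2))"
  define \<Omega> where "\<Omega> = \<nu>X \<Otimes>\<^sub>M G"
  define Yf where "Yf p = max (fst p) (real (snd p))" for p :: "real \<times> nat"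
  define \<mu> where "\<mu> = distr \<Omega> borel Yf"
  have Xsm: "Xs \<in> borel_measurable M" unfolding Xs_def using meas(2)[of 1] by measurable
  have \<nu>prob: "prob_space \<nu>X" unfolding \<nu>X_def by (rule prob_space_distr[OF Xsm])
  have Gprob: "prob_space G" unfolding G_def by (rule prob_space_measure_pmf)
  have \<Omega>prob: "prob_space \<Omega>" unfolding \<Omega>_def by (rule prob_space_pair[OF \<nu>prob Gprob])
  have fstm: "(\<lambda>p. fst p) \<in> borel_measurable \<Omega>"
  proof -
    have "(\<lambda>x::real. x) \<in> measurable \<nu>X borel" by (rule measurable_ident_sets) (simp add: \<nu>X_def)
    then show ?thesis unfolding \<Omega>_def by (rule measurable_compose[OF measurable_fst])
  qed
  have sndm: "(\<lambda>p. real (snd p)) \<in> borel_measurable \<Omega>"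
  proof -
    have "(\<lambda>w. real w) \<in> measurable G borel" by (simp add: G_def)
    then show ?thesis unfolding \<Omega>_def by (rule measurable_compose[OF measurable_snd])
  qed
  have Yfm: "Yf \<in> borel_measurable \<Omega>"
    unfolding Yf_def using fstm sndm by measurable
  have \<mu>prob: "prob_space \<mu>" unfolding \<mu>_def by (rule prob_space.prob_space_distr[OF \<Omega>prob Yfm])
  have \<mu>sets: "sets \<mu> = sets borel" by (simp add: \<mu>_def)
  have \<mu>neg: "emeasure \<mu> {..<0} = 0"
  proof -
    have "emeasure \<mu> {..<0} = emeasure \<Omega> (Yf -` {..<0} \<inter> space \<Omega>)"
      unfolding \<mu>_def by (rule emeasure_distr[OF Yfm]) simp
    also have "Yf -` {..<0} \<inter> space \<Omega> = {}" by (auto simp: Yf_def)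
    finally show ?thesis by simp
  qed
  have Pk: "prob {\<omega> \<in> space M. real m \<le> 6 * a * \<bar>S k \<omega>\<bar>} = prob {\<omega> \<in> space M. real m \<le> Xs \<omega>}"
    if k: "k \<ge> 1" for k m
  proof -
    have Bs: "{y::real. real m \<le> 6 * a * \<bar>y\<bar>} \<in> sets borel" by measurable
    have "prob {\<omega> \<in> space M. real m \<le> 6 * a * \<bar>S k \<omega>\<bar>} = measure (distr M borel (S k)) {y. real m \<le> 6 * a * \<bar>y\<bar>}"
      by (subst measure_distr[OF meas(2) Bs]) (auto intro!: arg_cong[where f=prob])
    also have "\<dots> = measure (distr M borel (S 1)) {y. real m \<le> 6 * a * \<bar>y\<bar>}" using Sid[OF k] by simp
    also have "\<dots> = prob {\<omega> \<in> space M. real m \<le> Xs \<omega>}"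
      by (subst measure_distr[OF meas(2) Bs]) (auto simp: Xs_def intro!: arg_cong[where f=prob])
    finally show ?thesis .
  qed
  have spO: "space \<Omega> = UNIV"
    by (simp add: \<Omega>_def \<nu>X_def G_def space_pair_measure)
  have Gsig: "sigma_finite_measure G" using Gprob by (simp add: prob_space_imp_sigma_finite)
  have mu_prod: "measure \<mu> {..x} = measure \<nu>X {..x} * measure G {w. real w \<le> x}" for x
  proof -
    have "measure \<mu> {..x} = measure \<Omega> (Yf -` {..x} \<inter> space \<Omega>)"
      unfolding \<mu>_def by (rule measure_distr[OF Yfm]) simp
    also have "Yf -` {..x} \<inter> space \<Omega> = {..x} \<times> {w. real w \<le> x}"
      unfolding spO by (auto simp: Yf_def)
    also have "emeasure \<Omega> ({..x} \<times> {w. real w \<le> x}) = emeasure \<nu>X {..x} * emeasure G {w. real w \<le> x}"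
      unfolding \<Omega>_def by (rule sigma_finite_measure.emeasure_pair_measure_Times[OF Gsig]) (auto simp: \<nu>X_def G_def)
    then have "measure \<Omega> ({..x} \<times> {w. real w \<le> x}) = measure \<nu>X {..x} * measure G {w. real w \<le> x}"
      by (simp add: measure_def enn2real_mult)
    finally show ?thesis .
  qed
  have dom: "\<And>n k. n \<ge> 1 \<Longrightarrow> k \<ge> 1 \<Longrightarrow>
     dominated_by_law M (\<lambda>\<omega>. real (arr_count n \<beta> (\<lambda>i. T i \<omega>) (\<lambda>j. S j \<omega>) k)) \<mu>"
  proof -
    fix n k :: nat assume n: "n \<ge> 1" and k: "k \<ge> 1"
    let ?arr = "\<lambda>\<omega>. arr_count n \<beta> (\<lambda>i. T i \<omega>) (\<lambda>j. S j \<omega>) k"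
    show "dominated_by_law M (\<lambda>\<omega>. real (?arr \<omega>)) \<mu>"
      unfolding dominated_by_law_def
    proof
      fix x :: real
      show "measure \<mu> {..x} \<le> measure M {\<omega> \<in> space M. real (?arr \<omega>) \<le> x}"
      proof (cases "x < 0")
        case True
        then have "{w. real w \<le> x} = {}" by auto
        then show ?thesis unfolding mu_prod by simp
      next
        case False
        define m where "m = nat \<lfloor>x\<rfloor> + 1"
        have m1: "m \<ge> 1" by (simp add: m_def)
        have wiff: "\<And>w::nat. real w \<le> x \<longleftrightarrow> w < m"
        proof -
          fix w :: nat
          have "real w \<le> x \<longleftrightarrow> int w \<le> \<lfloor>x\<rfloor>" by (simp add: le_floor_iff)
          also have "\<dots> \<longleftrightarrow> w < m"
          proof -
            have f: "0 \<le> \<lfloor>x\<rfloor>" using False by simp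
            show ?thesis unfolding m_def using le_nat_iff[OF f, of w] by (simp add: less_Suc_eq_le)
          qed
          finally show "real w \<le> x \<longleftrightarrow> w < m" .
        qed
        define h :: real where "h = (1/2)^m"
        have h1: "h \<le> 1" by (simp add: h_def power_le_one)
        have W: "{w. real w \<le> x} = {..<m}" using wiff by auto
        have mG: "measure G {w. real w \<le> x} = 1 - h"
          unfolding W G_def h_def using geo_partial[of m] by (simp add: measure_measure_pmf_finite)
        define p1 where "p1 = prob {\<omega> \<in> space M. real m \<le> Xs \<omega>}"
        have e1: "{\<omega> \<in> space M. real m \<le> Xs \<omega>} \<in> events" using Xsm by measurable
        have mX: "measure \<nu>X {..x} \<le> 1 - p1"
        proof -
          have "measure \<nu>X {..x} = prob (Xs -` {..x} \<inter> space M)"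
            unfolding \<nu>X_def by (rule measure_distr[OF Xsm]) simp
          also have "\<dots> \<le> prob (space M - {\<omega> \<in> space M. real m \<le> Xs \<omega>})"
          proof (rule finite_measure_mono)
            have "x < real m" unfolding m_def using False by linarith
            then show "Xs -` {..x} \<inter> space M \<subseteq> space M - {\<omega> \<in> space M. real m \<le> Xs \<omega>}" by auto
            show "space M - {\<omega> \<in> space M. real m \<le> Xs \<omega>} \<in> events" using e1 by auto
          qed
          also have "\<dots> = 1 - p1" unfolding p1_def by (rule prob_compl[OF e1])
          finally show ?thesis .
        qed
        define Am where "Am = {\<omega> \<in> space M. m \<le> ?arr \<omega>}"
        have Am_ev: "Am \<in> events"
        proof -
          have "?arr -` {m..} \<inter> space M \<in> events"
            by (rule measurable_sets[OF arr_count_meas[OF meas]]) simp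
          moreover have "?arr -` {m..} \<inter> space M = Am" by (auto simp: Am_def)
          ultimately show ?thesis by simp
        qed
        have tb0: "emeasure M Am \<le> ennreal ((1/2)^m + (1 - (1/2)^m) * prob {\<omega> \<in> space M. real m \<le> 6 * a * \<bar>S k \<omega>\<bar>})"
          unfolding Am_def a_def by (rule tail_bound[OF meas indep intv f0 n k m1])
        have tb: "emeasure M Am \<le> ennreal (h + (1 - h) * p1)"
          using tb0 unfolding Pk[OF k] h_def p1_def .
        have pAm: "prob Am \<le> h + (1 - h) * p1"
        proof -
          have "0 \<le> h + (1 - h) * p1" using h1 by (simp add: h_def p1_def)
          then show ?thesis using tb unfolding emeasure_eq_measure by (rule ennreal_le_iff[THEN iffD1])
        qed
        have "{\<omega> \<in> space M. real (?arr \<omega>) \<le> x} = space M - Am"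
        proof -
          have "\<And>\<omega>. real (?arr \<omega>) \<le> x \<longleftrightarrow> \<not> m \<le> ?arr \<omega>" using wiff by (simp add: not_le)
          then show ?thesis by (auto simp: Am_def)
        qed
        then have "measure M {\<omega> \<in> space M. real (?arr \<omega>) \<le> x} = 1 - prob Am"
          using prob_compl[OF Am_ev] by simp
        moreover have "measure \<mu> {..x} \<le> (1 - p1) * (1 - h)"
          unfolding mu_prod mG using mX h1 by (intro mult_right_mono) auto
        moreover have "(1 - p1) * (1 - h) = 1 - (h + (1 - h) * p1)" by (simp add: algebra_simps)
        ultimately show ?thesis using pAm by linarith
      qed
    qed
  qed
  define hh where "hh p = (Yf p)\<^sup>2" for p
  have hhm: "hh \<in> borel_measurable \<Omega>" unfolding hh_def using Yfm by measurable
  have fin: "(\<integral>\<^sup>+ p. ennreal (hh p) \<partial>\<Omega>) < \<infinity>"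
  proof -
    define Cg where "Cg = (\<integral>\<^sup>+ w. ennreal ((real w)\<^sup>2) \<partial>G)"
    have Cgfin: "Cg < \<infinity>"
    proof -
      have sm: "summable (\<lambda>w. (1/2::real) * (real w ^2 * (1/2)^w))"
        by (rule summable_mult[OF geo_summable])
      have "Cg = (\<integral>\<^sup>+ w. ennreal (pmf (geometric_pmf (1/2)) w) * ennreal ((real w)\<^sup>2) \<partial>count_space UNIV)"
        unfolding Cg_def G_def by (rule nn_integral_measure_pmf)
      also have "\<dots> = (\<Sum>w. ennreal (pmf (geometric_pmf (1/2)) w) * ennreal ((real w)\<^sup>2))"
        by (rule nn_integral_count_space_nat)
      also have "\<dots> = (\<Sum>w. ennreal ((1/2::real) * (real w ^2 * (1/2)^w)))"
        by (intro suminf_cong) (simp add: ennreal_mult[symmetric] algebra_simps)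
      also have "\<dots> = ennreal (\<Sum>w. (1/2::real) * (real w ^2 * (1/2)^w))"
        by (rule suminf_ennreal2[OF _ sm]) simp
      finally show ?thesis by simp
    qed
    have S1fin: "(\<integral>\<^sup>+ \<omega>. ennreal ((S 1 \<omega>)\<^sup>2) \<partial>M) < \<infinity>"
      using integrableD(2)[OF S2] by (simp add: less_top)
    have Xfin: "(\<integral>\<^sup>+ x. ennreal (x\<^sup>2) \<partial>\<nu>X) < \<infinity>"
    proof -
      have "(\<integral>\<^sup>+ x. ennreal (x\<^sup>2) \<partial>\<nu>X) = (\<integral>\<^sup>+ \<omega>. ennreal ((Xs \<omega>)\<^sup>2) \<partial>M)"
        unfolding \<nu>X_def by (rule nn_integral_distr[OF Xsm]) simp
      also have "\<dots> = (\<integral>\<^sup>+ \<omega>. ennreal ((6 * a)\<^sup>2) * ennreal ((S 1 \<omega>)\<^sup>2) \<partial>M)"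
        by (intro nn_integral_cong) (simp add: Xs_def ennreal_mult[symmetric] power_mult_distrib)
      also have "\<dots> = ennreal ((6 * a)\<^sup>2) * (\<integral>\<^sup>+ \<omega>. ennreal ((S 1 \<omega>)\<^sup>2) \<partial>M)"
        by (rule nn_integral_cmult) (use meas(2)[of 1] in measurable)
      also have "\<dots> < \<infinity>" using S1fin by (simp add: ennreal_mult_less_top)
      finally show ?thesis .
    qed
    have "(\<integral>\<^sup>+ p. ennreal (hh p) \<partial>\<Omega>) \<le> (\<integral>\<^sup>+ p. ennreal ((fst p)\<^sup>2 + (real (snd p))\<^sup>2) \<partial>\<Omega>)"
    proof (rule nn_integral_mono)
      fix p :: "real \<times> nat"
      have "(Yf p)\<^sup>2 \<le> (fst p)\<^sup>2 + (real (snd p))\<^sup>2"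
      proof (cases "fst p \<le> real (snd p)")
        case True then show ?thesis by (simp add: Yf_def max_def)
      next
        case False
        then have "Yf p = fst p" by (simp add: Yf_def)
        then show ?thesis by simp
      qed
      then show "ennreal (hh p) \<le> ennreal ((fst p)\<^sup>2 + (real (snd p))\<^sup>2)"
        unfolding hh_def by (rule ennreal_leI)
    qed
    also have "\<dots> = (\<integral>\<^sup>+ x. \<integral>\<^sup>+ w. ennreal ((fst (x, w))\<^sup>2 + (real (snd (x, w)))\<^sup>2) \<partial>G \<partial>\<nu>X)"
      unfolding \<Omega>_def
      by (rule sigma_finite_measure.nn_integral_fst[OF Gsig, symmetric])
         (use fstm sndm in \<open>simp add: \<Omega>_def\<close>)
    also have "\<dots> = (\<integral>\<^sup>+ x. ennreal (x\<^sup>2) + Cg \<partial>\<nu>X)"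
    proof (rule nn_integral_cong)
      fix x :: real
      have "(\<integral>\<^sup>+ w. ennreal ((fst (x, w))\<^sup>2 + (real (snd (x, w)))\<^sup>2) \<partial>G)
          = (\<integral>\<^sup>+ w. ennreal (x\<^sup>2) + ennreal ((real w)\<^sup>2) \<partial>G)"
        by (intro nn_integral_cong) (simp add: ennreal_plus)
      also have "\<dots> = (\<integral>\<^sup>+ w. ennreal (x\<^sup>2) \<partial>G) + Cg"
        unfolding Cg_def by (rule nn_integral_add) (simp_all add: G_def)
      also have "(\<integral>\<^sup>+ w. ennreal (x\<^sup>2) \<partial>G) = ennreal (x\<^sup>2)"
        using prob_space.emeasure_space_1[OF Gprob] by simp
      finally show "(\<integral>\<^sup>+ w. ennreal ((fst (x, w))\<^sup>2 + (real (snd (x, w)))\<^sup>2) \<partial>G) = ennreal (x\<^sup>2) + Cg" .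
    qed
    also have "\<dots> = (\<integral>\<^sup>+ x. ennreal (x\<^sup>2) \<partial>\<nu>X) + (\<integral>\<^sup>+ x. Cg \<partial>\<nu>X)"
      by (rule nn_integral_add) (simp_all add: \<nu>X_def)
    also have "(\<integral>\<^sup>+ x. Cg \<partial>\<nu>X) = Cg"
      using prob_space.emeasure_space_1[OF \<nu>prob] by simp
    also have "(\<integral>\<^sup>+ x. ennreal (x\<^sup>2) \<partial>\<nu>X) + Cg < \<infinity>" using Xfin Cgfin by simp
    finally show ?thesis .
  qed
  have ui: "unif_integrable_laws {1..} (\<lambda>n. distr \<mu> borel (\<lambda>x. x\<^sup>2))"
    unfolding unif_integrable_laws_def
  proof (intro allI impI)
    fix \<epsilon> :: real assume e: "\<epsilon> > 0"
    obtain K where K: "(\<integral>\<^sup>+ p. ennreal (hh p * indicator {p. hh p > K} p) \<partial>\<Omega>) \<le> ennreal \<epsilon>"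
      using ui_tail[OF hhm _ fin e] unfolding hh_def by auto
    have "(\<integral>\<^sup>+ z. ennreal (\<bar>z\<bar> * indicator {z. \<bar>z\<bar> > K} z) \<partial>distr \<mu> borel (\<lambda>x. x\<^sup>2))
        = (\<integral>\<^sup>+ p. ennreal (hh p * indicator {p. hh p > K} p) \<partial>\<Omega>)"
    proof -
      have "(\<integral>\<^sup>+ z. ennreal (\<bar>z\<bar> * indicator {z. \<bar>z\<bar> > K} z) \<partial>distr \<mu> borel (\<lambda>x. x\<^sup>2))
          = (\<integral>\<^sup>+ y. ennreal (\<bar>y\<^sup>2\<bar> * indicator {z. \<bar>z\<bar> > K} (y\<^sup>2)) \<partial>\<mu>)"
        by (rule nn_integral_distr) (simp_all add: \<mu>_def)
      also have "\<dots> = (\<integral>\<^sup>+ p. ennreal (\<bar>(Yf p)\<^sup>2\<bar> * indicator {z. \<bar>z\<bar> > K} ((Yf p)\<^sup>2)) \<partial>\<Omega>)"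
        unfolding \<mu>_def by (rule nn_integral_distr[OF Yfm]) simp
      also have "\<dots> = (\<integral>\<^sup>+ p. ennreal (hh p * indicator {p. hh p > K} p) \<partial>\<Omega>)"
        by (intro nn_integral_cong) (simp add: hh_def indicator_def)
      finally show ?thesis .
    qed
    then have "(\<integral>\<^sup>+ z. ennreal (\<bar>z\<bar> * indicator {z. \<bar>z\<bar> > K} z) \<partial>distr \<mu> borel (\<lambda>x. x\<^sup>2)) \<le> ennreal \<epsilon>"
      using K by simp
    then show "\<exists>K. \<forall>n\<in>{1..}. (\<integral>\<^sup>+ z. ennreal (\<bar>z\<bar> * indicator {z. \<bar>z\<bar> > K} z) \<partial>distr \<mu> borel (\<lambda>x. x\<^sup>2)) \<le> ennreal \<epsilon>"
      by blast
  qed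
  show ?thesis using \<mu>prob \<mu>sets \<mu>neg dom ui
    by (intro allI impI exI[of _ "\<lambda>_. \<mu>"]) auto
qed

end
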